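(* Let $\mathcal{M}$ be any $R\times K$ matrix with entries in a finite set $V$ and let $\hat v\subseteq V$. For each row $r$ let $z_r$ be the number of stretches of $\hat v$ in row $r$. For $0\le k<K$ define $$ls^+_k=\max(0,\#^{\hat v}_k-\#^{\hat v}_{k-1}),\qquad us^+_k=\#^{\hat v}_k-\max(0,\#^{\hat v}_{k-1}+\#^{\hat v}_k-R),$$ $$ls^-_k=\max(0,\#^{\hat v}_k-\#^{\hat v}_{k+1}),\qquad us^-_k=\#^{\hat v}_k-\max(0,\#^{\hat v}_{k+1}+\#^{\hat v}_k-R).$$ Then $$\sum_{k=0}^{K-1}ls^+_k\le\sum_{r=0}^{R-1}z_r\le\sum_{k=0}^{K-1}us^+_k\quad\text{and}\quad \sum_{k=0}^{K-1}ls^-_k\le\sum_{r=0}^{R-1}z_r\le\sum_{k=0}^{K-1}us^-_k.$$ Moreover, for each $k$, $ls^+_k$ and $us^+_k$ are respectively a lower and an upper bound on the number of stretches of $\hat v$ (over all rows) starting in column $k$, and $ls^-_k$, $us^-_k$ are respectively a lower and an upper bound on the number of stretches of $\hat v$ ending in column $k$.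
   Context: Columns are indexed $0,\ldots,K-1$ and rows $0,\ldots,R-1$. For $\hat v\subseteq V$ and a column $k$, $\#^{\hat v}_k$ denotes the number of rows $r$ with $\mathcal{M}_{r,k}\in\hat v$, with the convention $\#^{\hat v}_{-1}=\#^{\hat v}_{K}=0$. A stretch of $\hat v$ in row $r$ is a maximal (with respect to inclusion) interval $[a,b]$ of column indices such that $\mathcal{M}_{r,j}\in\hat v$ for all $a\le j\le b$; it starts in column $a$, ends in column $b$, and has length $b-a+1$. *)

theory Defs
  imports Main
begin

text \<open>An R x K matrix is modelled as a function M :: nat => nat => 'v, with rows
  r < R and columns k < K. Column indices for the counts are integers so that the
  convention #_{-1} = #_K = 0 can be stated.\<close>

definition colcount :: "(nat \<Rightarrow> nat \<Rightarrow> 'v) \<Rightarrow> nat \<Rightarrow> nat \<Rightarrow> 'v set \<Rightarrow> int \<Rightarrow> int" where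
  "colcount M R K vh k =
     (if 0 \<le> k \<and> k < int K then int (card {r. r < R \<and> M r (nat k) \<in> vh}) else 0)"

definition in_vh_interval :: "(nat \<Rightarrow> nat \<Rightarrow> 'v) \<Rightarrow> nat \<Rightarrow> 'v set \<Rightarrow> nat \<Rightarrow> nat \<Rightarrow> nat \<Rightarrow> bool" where
  "in_vh_interval M K vh r a b \<longleftrightarrow> a \<le> b \<and> b < K \<and> (\<forall>j. a \<le> j \<and> j \<le> b \<longrightarrow> M r j \<in> vh)"

definition is_stretch :: "(nat \<Rightarrow> nat \<Rightarrow> 'v) \<Rightarrow> nat \<Rightarrow> 'v set \<Rightarrow> nat \<Rightarrow> nat \<Rightarrow> nat \<Rightarrow> bool" where
  "is_stretch M K vh r a b \<longleftrightarrow> in_vh_interval M K vh r a b \<and>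
     (\<forall>a' b'. in_vh_interval M K vh r a' b' \<and> {a..b} \<subseteq> {a'..b'} \<longrightarrow> a' = a \<and> b' = b)"

definition num_stretches :: "(nat \<Rightarrow> nat \<Rightarrow> 'v) \<Rightarrow> nat \<Rightarrow> 'v set \<Rightarrow> nat \<Rightarrow> nat" where
  "num_stretches M K vh r = card {(a, b). is_stretch M K vh r a b}"

definition num_starting :: "(nat \<Rightarrow> nat \<Rightarrow> 'v) \<Rightarrow> nat \<Rightarrow> nat \<Rightarrow> 'v set \<Rightarrow> nat \<Rightarrow> nat" where
  "num_starting M R K vh k = card {(r, a, b). r < R \<and> is_stretch M K vh r a b \<and> a = k}"

definition num_ending :: "(nat \<Rightarrow> nat \<Rightarrow> 'v) \<Rightarrow> nat \<Rightarrow> nat \<Rightarrow> 'v set \<Rightarrow> nat \<Rightarrow> nat" where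
  "num_ending M R K vh k = card {(r, a, b). r < R \<and> is_stretch M K vh r a b \<and> b = k}"

definition ls_plus :: "(nat \<Rightarrow> nat \<Rightarrow> 'v) \<Rightarrow> nat \<Rightarrow> nat \<Rightarrow> 'v set \<Rightarrow> nat \<Rightarrow> int" where
  "ls_plus M R K vh k = max 0 (colcount M R K vh (int k) - colcount M R K vh (int k - 1))"

definition us_plus :: "(nat \<Rightarrow> nat \<Rightarrow> 'v) \<Rightarrow> nat \<Rightarrow> nat \<Rightarrow> 'v set \<Rightarrow> nat \<Rightarrow> int" where
  "us_plus M R K vh k = colcount M R K vh (int k)
     - max 0 (colcount M R K vh (int k - 1) + colcount M R K vh (int k) - int R)"

definition ls_minus :: "(nat \<Rightarrow> nat \<Rightarrow> 'v) \<Rightarrow> nat \<Rightarrow> nat \<Rightarrow> 'v set \<Rightarrow> nat \<Rightarrow> int" where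
  "ls_minus M R K vh k = max 0 (colcount M R K vh (int k) - colcount M R K vh (int k + 1))"

definition us_minus :: "(nat \<Rightarrow> nat \<Rightarrow> 'v) \<Rightarrow> nat \<Rightarrow> nat \<Rightarrow> 'v set \<Rightarrow> nat \<Rightarrow> int" where
  "us_minus M R K vh k = colcount M R K vh (int k)
     - max 0 (colcount M R K vh (int k + 1) + colcount M R K vh (int k) - int R)"

end

theory Submission
  imports Defs
begin

definition st :: "(nat \<Rightarrow> nat \<Rightarrow> 'v) \<Rightarrow> nat \<Rightarrow> 'v set \<Rightarrow> nat \<Rightarrow> nat \<Rightarrow> bool" where
  "st M K vh r k \<longleftrightarrow> k < K \<and> M r k \<in> vh \<and> (k = 0 \<or> M r (k-1) \<notin> vh)"
definition en :: "(nat \<Rightarrow> nat \<Rightarrow> 'v) \<Rightarrow> nat \<Rightarrow> 'v set \<Rightarrow> nat \<Rightarrow> nat \<Rightarrow> bool" where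
  "en M K vh r k \<longleftrightarrow> k < K \<and> M r k \<in> vh \<and> (Suc k = K \<or> M r (Suc k) \<notin> vh)"

lemma stretch_char:
  "is_stretch M K vh r a b \<longleftrightarrow> in_vh_interval M K vh r a b \<and> (a = 0 \<or> M r (a-1) \<notin> vh)
     \<and> (Suc b = K \<or> M r (Suc b) \<notin> vh)"
proof
  assume S: "is_stretch M K vh r a b"
  hence I: "in_vh_interval M K vh r a b" by (simp add: is_stretch_def)
  have A: "a = 0 \<or> M r (a-1) \<notin> vh"
  proof (rule ccontr)
    assume "\<not> ?thesis"
    hence "a > 0" "M r (a-1) \<in> vh" by auto
    hence "in_vh_interval M K vh r (a-1) b"
    proof -
      have "\<forall>j. a - 1 \<le> j \<and> j \<le> b \<longrightarrow> M r j \<in> vh"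
      proof (intro allI impI)
        fix j assume "a - 1 \<le> j \<and> j \<le> b"
        hence "j = a - 1 \<or> (a \<le> j \<and> j \<le> b)" by linarith
        thus "M r j \<in> vh" using I \<open>M r (a-1) \<in> vh\<close> unfolding in_vh_interval_def by auto
      qed
      thus ?thesis using I unfolding in_vh_interval_def by auto
    qed
    moreover have "{a..b} \<subseteq> {a-1..b}" by auto
    ultimately show False using S \<open>a>0\<close> unfolding is_stretch_def by fastforce
  qed
  have B: "Suc b = K \<or> M r (Suc b) \<notin> vh"
  proof (rule ccontr)
    assume "\<not> ?thesis"
    hence "Suc b < K" "M r (Suc b) \<in> vh" using I unfolding in_vh_interval_def by auto
    hence "in_vh_interval M K vh r a (Suc b)" using I unfolding in_vh_interval_def
      by (auto simp: le_Suc_eq)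
    moreover have "{a..b} \<subseteq> {a..Suc b}" by auto
    ultimately show False using S unfolding is_stretch_def by fastforce
  qed
  show "in_vh_interval M K vh r a b \<and> (a = 0 \<or> M r (a-1) \<notin> vh)
     \<and> (Suc b = K \<or> M r (Suc b) \<notin> vh)" using I A B by blast
next
  assume H: "in_vh_interval M K vh r a b \<and> (a = 0 \<or> M r (a-1) \<notin> vh)
     \<and> (Suc b = K \<or> M r (Suc b) \<notin> vh)"
  show "is_stretch M K vh r a b" unfolding is_stretch_def
  proof (intro conjI allI impI)
    show "in_vh_interval M K vh r a b" using H by simp
    fix a' b' assume J: "in_vh_interval M K vh r a' b' \<and> {a..b} \<subseteq> {a'..b'}"
    have ab: "a \<le> b" using H by (simp add: in_vh_interval_def)
    hence "a \<in> {a'..b'}" "b \<in> {a'..b'}" using J by auto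
    hence le: "a' \<le> a" "b \<le> b'" by auto
    show "a' = a"
    proof (rule ccontr)
      assume "a' \<noteq> a"
      hence "a' < a" using le by simp
      hence "a' \<le> a - 1 \<and> a - 1 \<le> b'" using le ab by linarith
      hence "M r (a-1) \<in> vh" using J unfolding in_vh_interval_def by blast
      thus False using H \<open>a' < a\<close> by auto
    qed
    show "b' = b"
    proof (rule ccontr)
      assume "b' \<noteq> b"
      hence "b < b'" using le by simp
      hence "M r (Suc b) \<in> vh" "Suc b < K" using J le ab unfolding in_vh_interval_def by auto
      thus False using H by auto
    qed
  qed
qed


lemma stretch_st: "is_stretch M K vh r a b \<Longrightarrow> st M K vh r a"
  unfolding stretch_char st_def in_vh_interval_def by auto

lemma stretch_en: "is_stretch M K vh r a b \<Longrightarrow> en M K vh r b"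
  unfolding stretch_char en_def in_vh_interval_def by auto

lemma stretch_uniq1: "is_stretch M K vh r a b1 \<Longrightarrow> is_stretch M K vh r a b2 \<Longrightarrow> b1 = b2"
proof -
  have *: "False" if "is_stretch M K vh r a b1" "is_stretch M K vh r a b2" "b1 < b2" for b1 b2
    using that unfolding stretch_char in_vh_interval_def by auto
  show "is_stretch M K vh r a b1 \<Longrightarrow> is_stretch M K vh r a b2 \<Longrightarrow> b1 = b2"
    using *[of b1 b2] *[of b2 b1] by (meson linorder_neqE_nat)
qed

lemma stretch_uniq2: "is_stretch M K vh r a1 b \<Longrightarrow> is_stretch M K vh r a2 b \<Longrightarrow> a1 = a2"
proof -
  have *: "False" if "is_stretch M K vh r a1 b" "is_stretch M K vh r a2 b" "a1 < a2" for a1 a2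
  proof -
    have "a1 \<le> a2 - 1 \<and> a2 - 1 \<le> b" using that unfolding stretch_char in_vh_interval_def by auto
    hence "M r (a2 - 1) \<in> vh" using that(1) unfolding stretch_char in_vh_interval_def by blast
    thus False using that unfolding stretch_char by auto
  qed
  show "is_stretch M K vh r a1 b \<Longrightarrow> is_stretch M K vh r a2 b \<Longrightarrow> a1 = a2"
    using *[of a1 a2] *[of a2 a1] by (meson linorder_neqE_nat)
qed

lemma st_exists: assumes "st M K vh r a" shows "\<exists>b. is_stretch M K vh r a b"
proof -
  define S where "S = {b. a \<le> b \<and> b < K \<and> (\<forall>j. a \<le> j \<and> j \<le> b \<longrightarrow> M r j \<in> vh)}"
  have fin: "finite S" unfolding S_def by (rule finite_subset[of _ "{..<K}"]) auto
  have ne: "a \<in> S" using assms unfolding S_def st_def by (auto simp: le_antisym)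
  define b where "b = Max S"
  have bS: "b \<in> S" unfolding b_def using fin ne by (intro Max_in) auto
  have bmax: "\<And>c. c \<in> S \<Longrightarrow> c \<le> b" using fin b_def by simp
  have "Suc b = K \<or> M r (Suc b) \<notin> vh"
  proof (rule ccontr)
    assume "\<not> ?thesis"
    hence "Suc b \<in> S" using bS unfolding S_def by (auto simp: le_Suc_eq)
    thus False using bmax by fastforce
  qed
  hence "is_stretch M K vh r a b" using bS assms
    unfolding stretch_char S_def in_vh_interval_def st_def by auto
  thus ?thesis by blast
qed

lemma en_exists: assumes "en M K vh r b" shows "\<exists>a. is_stretch M K vh r a b"
proof -
  define S where "S = {a. a \<le> b \<and> (\<forall>j. a \<le> j \<and> j \<le> b \<longrightarrow> M r j \<in> vh)}"
  have fin: "finite S" unfolding S_def by (rule finite_subset[of _ "{..b}"]) auto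
  have ne: "b \<in> S" using assms unfolding S_def en_def by (auto simp: le_antisym)
  define a where "a = Min S"
  have aS: "a \<in> S" unfolding a_def using fin ne by (intro Min_in) auto
  have amin: "\<And>c. c \<in> S \<Longrightarrow> a \<le> c" using fin a_def by simp
  have "a = 0 \<or> M r (a-1) \<notin> vh"
  proof (rule ccontr)
    assume H: "\<not> ?thesis"
    hence H2: "a > 0" "M r (a - 1) \<in> vh" by auto
    have "\<forall>j. a - 1 \<le> j \<and> j \<le> b \<longrightarrow> M r j \<in> vh"
    proof (intro allI impI)
      fix j assume "a - 1 \<le> j \<and> j \<le> b"
      hence "j = a - 1 \<or> (a \<le> j \<and> j \<le> b)" by linarith
      thus "M r j \<in> vh" using aS H2 unfolding S_def by auto
    qed
    hence "a - 1 \<in> S" using aS unfolding S_def by auto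
    thus False using amin H by fastforce
  qed
  hence "is_stretch M K vh r a b" using aS assms
    unfolding stretch_char S_def in_vh_interval_def en_def by auto
  thus ?thesis by blast
qed

lemma num_stretches_st: "num_stretches M K vh r = card {a. st M K vh r a}"
  unfolding num_stretches_def
proof (rule bij_betw_same_card)
  show "bij_betw fst {(a, b). is_stretch M K vh r a b} {a. st M K vh r a}"
    unfolding bij_betw_def
  proof
    show "inj_on fst {(a, b). is_stretch M K vh r a b}"
      by (auto simp: inj_on_def dest: stretch_uniq1)
    show "fst ` {(a, b). is_stretch M K vh r a b} = {a. st M K vh r a}"
    proof
      show "fst ` {(a, b). is_stretch M K vh r a b} \<subseteq> {a. st M K vh r a}"
        using stretch_st by auto
      show "{a. st M K vh r a} \<subseteq> fst ` {(a, b). is_stretch M K vh r a b}"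
      proof
        fix a assume "a \<in> {a. st M K vh r a}"
        then obtain b where "is_stretch M K vh r a b" using st_exists by blast
        thus "a \<in> fst ` {(a, b). is_stretch M K vh r a b}"
          by (intro image_eqI[of _ _ "(a,b)"]) auto
      qed
    qed
  qed
qed

lemma num_stretches_en: "num_stretches M K vh r = card {b. en M K vh r b}"
  unfolding num_stretches_def
proof (rule bij_betw_same_card)
  show "bij_betw snd {(a, b). is_stretch M K vh r a b} {b. en M K vh r b}"
    unfolding bij_betw_def
  proof
    show "inj_on snd {(a, b). is_stretch M K vh r a b}"
      by (auto simp: inj_on_def dest: stretch_uniq2)
    show "snd ` {(a, b). is_stretch M K vh r a b} = {b. en M K vh r b}"
    proof
      show "snd ` {(a, b). is_stretch M K vh r a b} \<subseteq> {b. en M K vh r b}"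
        using stretch_en by auto
      show "{b. en M K vh r b} \<subseteq> snd ` {(a, b). is_stretch M K vh r a b}"
      proof
        fix b assume "b \<in> {b. en M K vh r b}"
        then obtain a where "is_stretch M K vh r a b" using en_exists by blast
        thus "b \<in> snd ` {(a, b). is_stretch M K vh r a b}"
          by (intro image_eqI[of _ _ "(a,b)"]) auto
      qed
    qed
  qed
qed

lemma num_starting_st: "num_starting M R K vh k = card {r. r < R \<and> st M K vh r k}"
  unfolding num_starting_def
proof (rule bij_betw_same_card)
  show "bij_betw fst {(r, a, b). r < R \<and> is_stretch M K vh r a b \<and> a = k} {r. r < R \<and> st M K vh r k}"
    unfolding bij_betw_def
  proof
    show "inj_on fst {(r, a, b). r < R \<and> is_stretch M K vh r a b \<and> a = k}"
      by (auto simp: inj_on_def dest: stretch_uniq1)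
    show "fst ` {(r, a, b). r < R \<and> is_stretch M K vh r a b \<and> a = k} = {r. r < R \<and> st M K vh r k}"
    proof
      show "fst ` {(r, a, b). r < R \<and> is_stretch M K vh r a b \<and> a = k} \<subseteq> {r. r < R \<and> st M K vh r k}"
        using stretch_st by auto
      show "{r. r < R \<and> st M K vh r k} \<subseteq> fst ` {(r, a, b). r < R \<and> is_stretch M K vh r a b \<and> a = k}"
      proof
        fix r assume "r \<in> {r. r < R \<and> st M K vh r k}"
        then obtain b where "r < R" "is_stretch M K vh r k b" using st_exists by blast
        thus "r \<in> fst ` {(r, a, b). r < R \<and> is_stretch M K vh r a b \<and> a = k}"
          by (intro image_eqI[of _ _ "(r,k,b)"]) auto
      qed
    qed
  qed
qed

lemma num_ending_en: "num_ending M R K vh k = card {r. r < R \<and> en M K vh r k}"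
  unfolding num_ending_def
proof (rule bij_betw_same_card)
  show "bij_betw fst {(r, a, b). r < R \<and> is_stretch M K vh r a b \<and> b = k} {r. r < R \<and> en M K vh r k}"
    unfolding bij_betw_def
  proof
    show "inj_on fst {(r, a, b). r < R \<and> is_stretch M K vh r a b \<and> b = k}"
      by (auto simp: inj_on_def dest: stretch_uniq2)
    show "fst ` {(r, a, b). r < R \<and> is_stretch M K vh r a b \<and> b = k} = {r. r < R \<and> en M K vh r k}"
    proof
      show "fst ` {(r, a, b). r < R \<and> is_stretch M K vh r a b \<and> b = k} \<subseteq> {r. r < R \<and> en M K vh r k}"
        using stretch_en by auto
      show "{r. r < R \<and> en M K vh r k} \<subseteq> fst ` {(r, a, b). r < R \<and> is_stretch M K vh r a b \<and> b = k}"
      proof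
        fix r assume "r \<in> {r. r < R \<and> en M K vh r k}"
        then obtain a where "r < R" "is_stretch M K vh r a k" using en_exists by blast
        thus "r \<in> fst ` {(r, a, b). r < R \<and> is_stretch M K vh r a b \<and> b = k}"
          by (intro image_eqI[of _ _ "(r,a,k)"]) auto
      qed
    qed
  qed
qed

lemma swap_count:
  fixes P :: "nat \<Rightarrow> nat \<Rightarrow> bool"
  assumes "\<And>r a. P r a \<Longrightarrow> a < K"
  shows "(\<Sum>r<R. card {a. P r a}) = (\<Sum>k<K. card {r. r < R \<and> P r k})"
proof -
  have 1: "card {a. P r a} = (\<Sum>a<K. if P r a then 1 else 0)" for r
  proof -
    have "{a. P r a} = {a\<in>{..<K}. P r a}" using assms by auto
    moreover have "card {a\<in>{..<K}. P r a} = (\<Sum>a<K. if P r a then 1 else 0)"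
      using sum.inter_filter[OF finite_lessThan, where g="\<lambda>_. 1::nat" and P="P r"] by simp
    ultimately show ?thesis by simp
  qed
  have 2: "card {r. r < R \<and> P r k} = (\<Sum>r<R. if P r k then 1 else 0)" for k
  proof -
    have "{r. r < R \<and> P r k} = {r\<in>{..<R}. P r k}" by auto
    moreover have "card {r\<in>{..<R}. P r k} = (\<Sum>r<R. if P r k then 1 else 0)"
      using sum.inter_filter[OF finite_lessThan, where g="\<lambda>_. 1::nat" and P="\<lambda>r. P r k"] by simp
    ultimately show ?thesis by simp
  qed
  show ?thesis unfolding 1 2 by (rule sum.swap)
qed

lemma card_bounds:
  assumes "A \<subseteq> {..<R}" "B \<subseteq> {..<R}"
  shows "int (card A) - int (card B) \<le> int (card (A - B))
       \<and> int (card (A - B)) \<le> int (card A) - max 0 (int (card B) + int (card A) - int R)"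
proof -
  have fA: "finite A" "finite B" using assms finite_subset by auto
  have d: "card (A - B) + card (A \<inter> B) = card A"
    using fA by (metis Diff_Diff_Int Diff_subset card_Diff_subset card_mono finite_Diff
        inf_le1 le_add_diff_inverse2 Int_commute card_Diff_subset_Int)
  have u: "card A + card B = card (A \<union> B) + card (A \<inter> B)" using fA card_Un_Int by blast
  have "card (A \<union> B) \<le> R" using assms by (metis card_lessThan card_mono finite_lessThan Un_least)
  moreover have "card (A \<inter> B) \<le> card B" using fA by (simp add: card_mono)
  ultimately show ?thesis using d u by linarith
qed

lemma colcount_eq: "k < K \<Longrightarrow> colcount M R K vh (int k) = int (card {r. r < R \<and> M r k \<in> vh})"
  unfolding colcount_def by simp

lemma start_bounds:
  assumes "k < K"
  shows "ls_plus M R K vh k \<le> int (num_starting M R K vh k)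
       \<and> int (num_starting M R K vh k) \<le> us_plus M R K vh k"
proof -
  define A where "A = {r. r < R \<and> M r k \<in> vh}"
  define B where "B = (if k = 0 then {} else {r. r < R \<and> M r (k-1) \<in> vh})"
  have cA: "colcount M R K vh (int k) = int (card A)" using assms A_def colcount_eq by simp
  have cB: "colcount M R K vh (int k - 1) = int (card B)"
  proof (cases "k = 0")
    case True thus ?thesis by (simp add: B_def colcount_def)
  next
    case False
    hence e: "int k - 1 = int (k - 1)" by simp
    have "k - 1 < K" using assms by simp
    from colcount_eq[OF this, of M R vh] show ?thesis unfolding e using False by (simp add: B_def)
  qed
  have "{r. r < R \<and> st M K vh r k} = A - B" unfolding A_def B_def st_def using assms by auto
  hence n: "num_starting M R K vh k = card (A - B)" by (simp add: num_starting_st)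
  have "A \<subseteq> {..<R}" "B \<subseteq> {..<R}" unfolding A_def B_def by auto
  from card_bounds[OF this] show ?thesis unfolding n ls_plus_def us_plus_def cA cB
    by (simp add: add.commute)
qed

lemma end_bounds:
  assumes "k < K"
  shows "ls_minus M R K vh k \<le> int (num_ending M R K vh k)
       \<and> int (num_ending M R K vh k) \<le> us_minus M R K vh k"
proof -
  define A where "A = {r. r < R \<and> M r k \<in> vh}"
  define B where "B = (if Suc k = K then {} else {r. r < R \<and> M r (Suc k) \<in> vh})"
  have cA: "colcount M R K vh (int k) = int (card A)" using assms A_def colcount_eq by simp
  have cB: "colcount M R K vh (int k + 1) = int (card B)"
  proof (cases "Suc k = K")
    case True thus ?thesis by (simp add: B_def colcount_def)
  next
    case False
    hence "Suc k < K" using assms by simp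
    moreover have "int k + 1 = int (Suc k)" by simp
    ultimately show ?thesis using False colcount_eq[of "Suc k" K M R vh] by (simp add: B_def add.commute)
  qed
  have "{r. r < R \<and> en M K vh r k} = A - B" unfolding A_def B_def en_def using assms by auto
  hence n: "num_ending M R K vh k = card (A - B)" by (simp add: num_ending_en)
  have "A \<subseteq> {..<R}" "B \<subseteq> {..<R}" unfolding A_def B_def by auto
  from card_bounds[OF this] show ?thesis unfolding n ls_minus_def us_minus_def cA cB
    by (simp add: add.commute)
qed

theorem mainTheorem12:
  fixes M :: "nat \<Rightarrow> nat \<Rightarrow> 'v" and R K :: nat and V vh :: "'v set"
  assumes "finite V"
    and "\<forall>r<R. \<forall>k<K. M r k \<in> V"
    and "vh \<subseteq> V"
  shows "(\<Sum>k<K. ls_plus M R K vh k) \<le> (\<Sum>r<R. int (num_stretches M K vh r))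
       \<and> (\<Sum>r<R. int (num_stretches M K vh r)) \<le> (\<Sum>k<K. us_plus M R K vh k)
       \<and> (\<Sum>k<K. ls_minus M R K vh k) \<le> (\<Sum>r<R. int (num_stretches M K vh r))
       \<and> (\<Sum>r<R. int (num_stretches M K vh r)) \<le> (\<Sum>k<K. us_minus M R K vh k)
       \<and> (\<forall>k<K. ls_plus M R K vh k \<le> int (num_starting M R K vh k)
                \<and> int (num_starting M R K vh k) \<le> us_plus M R K vh k
                \<and> ls_minus M R K vh k \<le> int (num_ending M R K vh k)
                \<and> int (num_ending M R K vh k) \<le> us_minus M R K vh k)"
proof -
  have s1: "(\<Sum>r<R. int (num_stretches M K vh r)) = (\<Sum>k<K. int (num_starting M R K vh k))"
  proof -
    have "(\<Sum>r<R. num_stretches M K vh r) = (\<Sum>k<K. num_starting M R K vh k)"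
      unfolding num_stretches_st num_starting_st
      by (rule swap_count) (simp add: st_def)
    thus ?thesis by (metis of_nat_sum)
  qed
  have s2: "(\<Sum>r<R. int (num_stretches M K vh r)) = (\<Sum>k<K. int (num_ending M R K vh k))"
  proof -
    have "(\<Sum>r<R. num_stretches M K vh r) = (\<Sum>k<K. num_ending M R K vh k)"
      unfolding num_stretches_en num_ending_en
      by (rule swap_count) (simp add: en_def)
    thus ?thesis by (metis of_nat_sum)
  qed
  have b1: "(\<Sum>k<K. ls_plus M R K vh k) \<le> (\<Sum>k<K. int (num_starting M R K vh k))"
    by (rule sum_mono) (simp add: start_bounds)
  have b2: "(\<Sum>k<K. int (num_starting M R K vh k)) \<le> (\<Sum>k<K. us_plus M R K vh k)"
    by (rule sum_mono) (simp add: start_bounds)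
  have b3: "(\<Sum>k<K. ls_minus M R K vh k) \<le> (\<Sum>k<K. int (num_ending M R K vh k))"
    by (rule sum_mono) (simp add: end_bounds)
  have b4: "(\<Sum>k<K. int (num_ending M R K vh k)) \<le> (\<Sum>k<K. us_minus M R K vh k)"
    by (rule sum_mono) (simp add: end_bounds)
  have "\<forall>k<K. ls_plus M R K vh k \<le> int (num_starting M R K vh k)
                \<and> int (num_starting M R K vh k) \<le> us_plus M R K vh k
                \<and> ls_minus M R K vh k \<le> int (num_ending M R K vh k)
                \<and> int (num_ending M R K vh k) \<le> us_minus M R K vh k"
    using start_bounds end_bounds by blast
  moreover have "(\<Sum>k<K. ls_plus M R K vh k) \<le> (\<Sum>r<R. int (num_stretches M K vh r))"
    using b1 s1 by simp
  moreover have "(\<Sum>r<R. int (num_stretches M K vh r)) \<le> (\<Sum>k<K. us_plus M R K vh k)"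
    using b2 s1 by simp
  moreover have "(\<Sum>k<K. ls_minus M R K vh k) \<le> (\<Sum>r<R. int (num_stretches M K vh r))"
    using b3 s2 by simp
  moreover have "(\<Sum>r<R. int (num_stretches M K vh r)) \<le> (\<Sum>k<K. us_minus M R K vh k)"
    using b4 s2 by simp
  ultimately show ?thesis by blast
qed

end
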